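(* Let $q$ be an odd prime power, let $1\le n\le q^2-2$, and write $n=u+vq$ with $0\le u,v\le q-1$. Define \[ \mathrm{I}=\sum_{\substack{k\ge 1,\ j\ge 0\\ k+j\le q-1\\ 2k-j\equiv 0\pmod{q-1}\\ q(q-1)+k-j=n}}\binom{q-1-k}{j}(-1)^j . \] Then \[ \mathrm{I}=\sum_{\max\{-1,\,v-q+\frac{u+v}{q-1}\}<s\le v-q+\frac{u+v}{q-1}+1}\binom{u+v-(s-v+q-1)(q-1)}{(s-2v+2q)(q-1)-2(u+v)}, \] the sum being over integers $s$ in the indicated range.
   Context: For integers $m\ge 0$ and $k$, $\binom mk$ is the usual binomial coefficient, equal to $0$ unless $0\le k\le m$. *)

theory Defs
  imports Complex_Main "HOL-Number_Theory.Number_Theory"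
begin

definition ibinom :: "int \<Rightarrow> int \<Rightarrow> int" where
  "ibinom m k = (if 0 \<le> k \<and> k \<le> m then int (nat m choose nat k) else 0)"

end

theory Submission
  imports Defs
begin

lemma dvd_small: fixes m z :: int
  assumes "m > 0" "m dvd z" "-m < z" "z < m" shows "z = 0"
proof -
  obtain c where c: "z = m * c" using assms(2) by blast
  show ?thesis
  proof (cases "c = 0")
    case False
    then consider "c \<ge> 1" | "c \<le> -1" by linarith
    then show ?thesis
    proof cases
      case 1 then have "m * c \<ge> m * 1" using assms(1) by (intro mult_left_mono) auto
      then show ?thesis using c assms by linarith
    next
      case 2 then have "m * c \<le> m * (-1)" using assms(1) by (intro mult_left_mono) auto
      then show ?thesis using c assms by linarith
    qed
  qed (simp add: c)
qed

lemma floor_set: fixes x :: real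
  shows "{s::int. max (-1) x < real_of_int s \<and> real_of_int s \<le> x + 1}
     = (if -1 \<le> x then {\<lfloor>x\<rfloor> + 1} else {})"
proof (cases "-1 \<le> x")
  case True
  have "s = \<lfloor>x\<rfloor> + 1 \<longleftrightarrow> max (-1) x < real_of_int s \<and> real_of_int s \<le> x + 1" for s
  proof
    assume "s = \<lfloor>x\<rfloor> + 1" then show "max (-1) x < real_of_int s \<and> real_of_int s \<le> x + 1"
      using True by (smt (verit) floor_less_cancel of_int_1 of_int_add of_int_floor_le real_of_int_floor_add_one_gt)
  next
    assume a: "max (-1) x < real_of_int s \<and> real_of_int s \<le> x + 1"
    then have "real_of_int s - 1 \<le> x" "x < real_of_int s" by auto
    then have "\<lfloor>x\<rfloor> = s - 1" by (simp add: floor_eq_iff)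
    then show "s = \<lfloor>x\<rfloor> + 1" by simp
  qed
  then show ?thesis using True by auto
next
  case False
  have "\<not> (max (-1) x < real_of_int s \<and> real_of_int s \<le> x + 1)" for s
  proof
    assume a: "max (-1) x < real_of_int s \<and> real_of_int s \<le> x + 1"
    then have "s > -1" by auto
    then have "s \<ge> 0" by simp
    then show False using a False by linarith
  qed
  then show ?thesis using False by auto
qed

theorem lemma4p1:
  fixes q n u v :: nat
  assumes "primepow q" and "odd q"
    and "1 \<le> n" and "n \<le> q^2 - 2"
    and "n = u + v * q" and "u \<le> q - 1" and "v \<le> q - 1"
  shows "(\<Sum>(k, j) \<in> {(k, j). 1 \<le> k \<and> k + j \<le> q - 1
              \<and> (int q - 1) dvd (2 * int k - int j)
              \<and> int q * (int q - 1) + int k - int j = int n}.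
            ibinom (int q - 1 - int k) (int j) * (-1) ^ j)
       = (\<Sum>s \<in> {s::int. max (-1) (real v - real q + (real u + real v) / (real q - 1)) < real_of_int s
                  \<and> real_of_int s \<le> real v - real q + (real u + real v) / (real q - 1) + 1}.
            ibinom (int u + int v - (s - int v + int q - 1) * (int q - 1))
                   ((s - 2 * int v + 2 * int q) * (int q - 1) - 2 * (int u + int v)))"
  (is "sum ?f ?S = sum ?g ?T")
proof -
  have q1: "q > 1" using primepow_gt_Suc_0[OF assms(1)] by simp
  have q3: "q \<ge> 3" using q1 assms(2) by presburger
  define x where "x = real v - real q + (real u + real v) / (real q - 1)"
  have T: "?T = (if -1 \<le> x then {\<lfloor>x\<rfloor> + 1} else {})"
    unfolding x_def by (rule floor_set)
  have nI: "int n = int u + int v * int q" using assms(5) by simp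
  have nle: "int n \<le> int q * int q - 2"
  proof -
    have "q * 1 \<le> q * q" using q1 by (intro mult_le_mono) auto
    then have "q^2 \<ge> 2" using q3 unfolding power2_eq_square by linarith
    have "int n \<le> int (q^2 - 2)" using assms(4) by simp
    also have "\<dots> = int q * int q - 2" using \<open>q^2 \<ge> 2\<close> by (simp add: of_nat_diff power2_eq_square)
    finally show ?thesis .
  qed
  have qpos: "real q - 1 > 0" using q1 by simp
  have Sempty: "?S = {}" if nb: "int n \<le> int q * int q - 2 * int q + 2"
  proof (rule Set.equals0I)
    fix p assume "p \<in> ?S"
    then obtain k j where h: "1 \<le> k" "k + j \<le> q - 1"
          "int q * (int q - 1) + int k - int j = int n" by auto
    have "int k + int j \<le> int q - 1" using h(2) q1 by linarith
    moreover have "int q * (int q - 1) = int q * int q - int q" by (simp add: algebra_simps)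
    ultimately show False using h nb by linarith
  qed
  consider (A) "v = q - 1" | (B) "v = q - 2" "u \<ge> 2" | (B1) "v = q - 2" "u = 1"
    | (B0) "v = q - 2" "u = 0" | (C) "v + 3 \<le> q" using assms(7) q3 by linarith
  then show ?thesis
  proof cases
    case A
    have vI: "int v = int q - 1" using A q1 by simp
    have uq: "u + 2 \<le> q"
    proof -
      have "int u + (int q - 1) * int q \<le> int q * int q - 2" using nI nle vI by simp
      then show ?thesis by (simp add: algebra_simps)
    qed
    define c where "c = (2*u \<le> q-1 \<and> q-1 \<le> 3*u)"
    have S: "?S = (if c then {(q-1-u, q-1-2*u)} else {})"
    proof (rule Set.set_eqI)
      fix p :: "nat \<times> nat"
      obtain k j where p: "p = (k, j)" by (cases p)
      have "p \<in> ?S \<longleftrightarrow> c \<and> k = q-1-u \<and> j = q-1-2*u"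
      proof
        assume "p \<in> ?S"
        then have h: "1 \<le> k" "k + j \<le> q - 1" "(int q - 1) dvd (2 * int k - int j)"
          "int q * (int q - 1) + int k - int j = int n" using p by auto
        have kj: "int k - int j = int u" using h(4) nI vI by (simp add: algebra_simps)
        have "(int q - 1) dvd (2 * int k - int j - (int q - 1))" using h(3) by (simp add: dvd_diff)
        moreover have "2 * int k - int j - (int q - 1) = int k + int u - (int q - 1)" using kj by simp
        ultimately have "int k + int u - (int q - 1) = 0"
          using h(1,2) uq q1 by (intro dvd_small) auto
        then show "c \<and> k = q-1-u \<and> j = q-1-2*u" using kj h(2) uq unfolding c_def by auto
      next
        assume "c \<and> k = q-1-u \<and> j = q-1-2*u"
        then show "p \<in> ?S" using p uq q1 nI vI unfolding c_def
          by (auto simp: of_nat_diff algebra_simps)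
      qed
      then show "p \<in> ?S \<longleftrightarrow> p \<in> (if c then {(q-1-u, q-1-2*u)} else {})" using p by auto
    qed
    have ev: "even (q-1-2*u)" using assms(2) q1 by presburger
    have fval: "?f (q-1-u, q-1-2*u) = ibinom (int u) (int q - 1 - 2 * int u)" if c
    proof -
      have "int (q-1-2*u) = int q - 1 - 2*int u" "int (q-1-u) = int q - 1 - int u"
        using that uq unfolding c_def by arith+
      then show ?thesis using ev by simp
    qed
    have LHS: "sum ?f ?S = (if c then ibinom (int u) (int q - 1 - 2 * int u) else 0)"
      using S fval by simp
    have x: "x = real u / (real q - 1)" unfolding x_def using A q1 qpos
      by (simp add: of_nat_diff field_simps)
    have fx: "\<lfloor>x\<rfloor> = 0" unfolding x using qpos uq by (simp add: floor_eq_iff field_simps)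
    have x0: "-1 \<le> x" unfolding x using qpos divide_nonneg_nonneg[of "real u" "real q - 1"] by linarith
    have a1: "int u + int v - (1 - int v + int q - 1) * (int q - 1) = int u" unfolding vI by (simp add: algebra_simps)
    have a2: "(1 - 2*int v + 2*int q)*(int q - 1) - 2*(int u + int v) = int q - 1 - 2*int u" unfolding vI by (simp add: algebra_simps)
    have gval: "?g 1 = ibinom (int u) (int q - 1 - 2 * int u)" by (simp only: a1 a2)
    have RHS: "sum ?g ?T = ibinom (int u) (int q - 1 - 2 * int u)" using T fx x0 gval by simp
    have "\<not> c \<Longrightarrow> ibinom (int u) (int q - 1 - 2 * int u) = 0" unfolding c_def ibinom_def by auto
    then show ?thesis using LHS RHS by auto
  next
    case B
    have vI: "int v = int q - 2" using B q1 by simp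
    have vR: "real v = real q - 2" using B q3 by simp
    define c where "c = (3*(q-u) \<le> q-1)"
    have S: "?S = (if c then {(q-u, 2*(q-u))} else {})"
    proof (rule Set.set_eqI)
      fix p :: "nat \<times> nat"
      obtain k j where p: "p = (k, j)" by (cases p)
      have "p \<in> ?S \<longleftrightarrow> c \<and> k = q-u \<and> j = 2*(q-u)"
      proof
        assume "p \<in> ?S"
        then have h: "1 \<le> k" "k + j \<le> q - 1" "(int q - 1) dvd (2 * int k - int j)"
          "int q * (int q - 1) + int k - int j = int n" using p by auto
        have kj: "int k - int j = int u - int q" using h(4) nI vI by (simp add: algebra_simps)
        have e: "2 * int k - int j = int k + int u - int q" using kj by simp
        have "(int q - 1) dvd (int k + int u - int q)" using h(3) unfolding e .
        then have "int k + int u - int q = 0"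
          using h(1,2) kj assms(6) B q1 by (intro dvd_small[of "int q - 1"]) auto
        then show "c \<and> k = q-u \<and> j = 2*(q-u)" using kj h(2) assms(6) unfolding c_def by auto
      next
        assume "c \<and> k = q-u \<and> j = 2*(q-u)"
        then show "p \<in> ?S" using p B assms(6) q3 nI vI unfolding c_def
          by (auto simp: of_nat_diff algebra_simps)
      qed
      then show "p \<in> ?S \<longleftrightarrow> p \<in> (if c then {(q-u, 2*(q-u))} else {})" using p by auto
    qed
    have fval: "?f (q-u, 2*(q-u)) = ibinom (int u - 1) (2 * int q - 2 * int u)"
    proof -
      have "int (2*(q-u)) = 2 * int q - 2 * int u" "int (q-u) = int q - int u"
        using assms(6) q1 by arith+
      then show ?thesis by (simp add: algebra_simps)
    qed
    have LHS: "sum ?f ?S = (if c then ibinom (int u - 1) (2 * int q - 2 * int u) else 0)"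
      using S fval by simp
    have x: "x = -1 + (real u - 1) / (real q - 1)" unfolding x_def vR using qpos
      by (simp add: field_simps)
    have fx: "\<lfloor>x\<rfloor> = -1" unfolding x using qpos B assms(6) q1
      by (simp add: floor_eq_iff field_simps)
    have x0: "-1 \<le> x" unfolding x using qpos B divide_nonneg_nonneg[of "real u - 1" "real q - 1"] by simp
    have a1: "int u + int v - (0 - int v + int q - 1) * (int q - 1) = int u - 1" unfolding vI by (simp add: algebra_simps)
    have a2: "(0 - 2*int v + 2*int q)*(int q - 1) - 2*(int u + int v) = 2 * int q - 2 * int u" unfolding vI by (simp add: algebra_simps)
    have gval: "?g 0 = ibinom (int u - 1) (2 * int q - 2 * int u)" by (simp only: a1 a2)
    have RHS: "sum ?g ?T = ibinom (int u - 1) (2 * int q - 2 * int u)" using T fx x0 gval by simp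
    have "\<not> c \<Longrightarrow> ibinom (int u - 1) (2 * int q - 2 * int u) = 0" unfolding c_def ibinom_def using assms(6) by auto
    then show ?thesis using LHS RHS by auto
  next
    case B1
    have vI: "int v = int q - 2" using B1 q1 by simp
    have vR: "real v = real q - 2" using B1 q3 by simp
    have nb: "int n \<le> int q * int q - 2 * int q + 2" using nI vI B1 by (simp add: algebra_simps)
    have x: "x = -1" unfolding x_def vR using qpos B1 by (simp add: field_simps)
    have a1: "int u + int v - (0 - int v + int q - 1) * (int q - 1) = 0" unfolding vI using B1 by (simp add: algebra_simps)
    have "?g 0 = ibinom 0 ((0 - 2*int v + 2*int q)*(int q - 1) - 2*(int u + int v))" by (simp only: a1)
    also have "\<dots> = 0" unfolding ibinom_def vI using B1 q3 by (simp add: algebra_simps)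
    finally have g0: "?g 0 = 0" .
    have fx: "\<lfloor>x\<rfloor> = -1" unfolding x by (simp add: floor_eq_iff)
    have "?T = {0}" using T fx x by simp
    then have "sum ?g ?T = 0" using g0 by simp
    moreover have "?S = {}" using nb by (rule Sempty)
    ultimately show ?thesis by (simp only: sum.empty)
  next
    case B0
    have vI: "int v = int q - 2" using B0 q1 by simp
    have vR: "real v = real q - 2" using B0 q3 by simp
    have nb: "int n \<le> int q * int q - 2 * int q + 2" using nI vI B0 by (simp add: algebra_simps)
    have x: "x = -2 + (real q - 2) / (real q - 1)" unfolding x_def vR using qpos B0 by (simp add: field_simps)
    have "x < -1" unfolding x using qpos by (simp add: field_simps)
    then have "?T = {}" using T by (metis not_le)
    then have "sum ?g ?T = 0" by (simp only: sum.empty)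
    moreover have "?S = {}" using nb by (rule Sempty)
    ultimately show ?thesis by (simp only: sum.empty)
  next
    case C
    have "v * q \<le> (q - 3) * q" using C by (intro mult_right_mono) auto
    then have "int v * int q \<le> (int q - 3) * int q" using q3
      by (metis of_nat_diff of_nat_le_iff of_nat_mult of_nat_numeral)
    then have nb: "int n \<le> int q * int q - 2 * int q + 2" using nI assms(6) q1 by (simp add: algebra_simps)
    have "(real u + real v) / (real q - 1) < 2" using qpos assms(6) C q1 by (simp add: field_simps)
    then have "x < -1" unfolding x_def using C by linarith
    then have "?T = {}" using T by (metis not_le)
    then have "sum ?g ?T = 0" by (simp only: sum.empty)
    moreover have "?S = {}" using nb by (rule Sempty)
    ultimately show ?thesis by (simp only: sum.empty)
  qed
qed

end
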